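(* Fix $\varepsilon>0$, $w\in\mathbb{R}^L$ and $j\in[L]$. There is a unique $a\in\mathbb{R}$ satisfying $$w_j=a+\varepsilon/\sqrt2-\sum_{k\neq j}(w_k-a)_+.$$ Moreover, defining $v\in\mathbb{R}^L$ by $v_j=a+\varepsilon/\sqrt2$ and $v_k=\min\{a,w_k\}$ for $k\neq j$, $v$ is the (unique) Euclidean projection of $w$ onto $R_j^\varepsilon$, i.e. $v=\arg\min_{u\in R_j^\varepsilon}\|w-u\|$.
   Context: $(a)_+=\max\{a,0\}$, $\|\cdot\|$ the Euclidean norm, and $R_j^\varepsilon=\{u\in\mathbb{R}^L: u_j\ge\max_{\ell\neq j}u_\ell+\varepsilon/\sqrt2\}$. *)

theory Defs
  imports "HOL-Analysis.Analysis"
begin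

definition pos_part :: "real \<Rightarrow> real" where
  "pos_part a = max a 0"

text \<open>R_j^eps = {u. u_j \<ge> max_{l \<noteq> j} u_l + eps/sqrt 2}, written as a
  condition on every l \<noteq> j (vacuous if L = 1).\<close>
definition Reg :: "real \<Rightarrow> 'L::finite \<Rightarrow> (real ^ 'L) set" where
  "Reg eps j = {u. \<forall>l. l \<noteq> j \<longrightarrow> u $ j \<ge> u $ l + eps / sqrt 2}"

end

theory Submission
  imports Defs
begin

lemma pp_mono: "x \<le> y \<Longrightarrow> pos_part x \<le> pos_part y"
  by (simp add: pos_part_def)

lemma pp_nonneg: "pos_part x \<ge> 0"
  by (simp add: pos_part_def)

theorem lemma3:
  fixes eps :: real and w :: "real ^ 'L" and j :: "'L::finite"
  assumes "eps > 0"
  shows "(\<exists>!a::real. w $ j = a + eps / sqrt 2 - (\<Sum>k\<in>UNIV - {j}. pos_part (w $ k - a)))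
    \<and> (\<forall>a::real. w $ j = a + eps / sqrt 2 - (\<Sum>k\<in>UNIV - {j}. pos_part (w $ k - a)) \<longrightarrow>
           (let v = (\<chi> k. if k = j then a + eps / sqrt 2 else min a (w $ k)) in
              v \<in> Reg eps j \<and> (\<forall>u\<in>Reg eps j. u \<noteq> v \<longrightarrow> norm (w - v) < norm (w - u))))"
proof -
  define c where "c = eps / sqrt 2"
  have c: "c > 0" using assms by (simp add: c_def)
  define S where "S a = (\<Sum>k\<in>UNIV - {j}. pos_part (w $ k - a))" for a
  define F where "F a = a + c - S a" for a
  have Smono: "S b \<le> S a" if "a \<le> b" for a b
    unfolding S_def by (rule sum_mono) (use that in \<open>auto intro: pp_mono\<close>)
  have Snn: "S a \<ge> 0" for a unfolding S_def by (rule sum_nonneg) (simp add: pp_nonneg)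
  have Fmono: "F a < F b" if "a < b" for a b
    using Smono[of a b] that by (simp add: F_def)
  have ex: "\<exists>a. F a = w $ j"
  proof -
    define B where "B = \<bar>w $ j\<bar> + c + (\<Sum>k\<in>UNIV. \<bar>w $ k\<bar>)"
    have wk: "w $ k \<le> B" for k
    proof -
      have "\<bar>w $ k\<bar> \<le> (\<Sum>k\<in>UNIV. \<bar>w $ k\<bar>)"
        by (rule member_le_sum) auto
      then show ?thesis using c unfolding B_def by linarith
    qed
    have "S B = 0" unfolding S_def
      by (rule sum.neutral) (use wk in \<open>auto simp: pos_part_def\<close>)
    moreover have "0 \<le> (\<Sum>k\<in>UNIV. \<bar>w $ k\<bar>)" by (rule sum_nonneg) auto
    ultimately have hB: "w $ j \<le> F B" unfolding F_def B_def using c by linarith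
    have hA: "F (w $ j - c) \<le> w $ j" using Snn[of "w $ j - c"] by (simp add: F_def)
    have le: "w $ j - c \<le> B" unfolding B_def using c
      by (smt (verit) sum_nonneg abs_ge_zero)
    have cont: "isCont F x" for x
      unfolding F_def S_def pos_part_def by (intro continuous_intros)
    show ?thesis using IVT[of F "w $ j - c" "w $ j" B, OF hA hB le] cont by blast
  qed
  have part1: "\<exists>!a::real. w $ j = a + eps / sqrt 2 - (\<Sum>k\<in>UNIV - {j}. pos_part (w $ k - a))"
  proof -
    obtain a where "F a = w $ j" using ex by blast
    moreover have "b = a" if "F b = w $ j" for b
      using Fmono[of a b] Fmono[of b a] that \<open>F a = w $ j\<close> by (cases "a < b"; cases "b < a") auto
    ultimately show ?thesis unfolding F_def S_def c_def by metis
  qed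
  have part2: "let v = (\<chi> k. if k = j then a + eps / sqrt 2 else min a (w $ k)) in
              v \<in> Reg eps j \<and> (\<forall>u\<in>Reg eps j. u \<noteq> v \<longrightarrow> norm (w - v) < norm (w - u))"
    if ha: "w $ j = a + eps / sqrt 2 - (\<Sum>k\<in>UNIV - {j}. pos_part (w $ k - a))" for a
  proof -
    define v where "v = (\<chi> k. if k = j then a + c else min a (w $ k))"
    have vj: "v $ j = a + c" and vk: "\<And>k. k \<noteq> j \<Longrightarrow> v $ k = min a (w $ k)"
      by (auto simp: v_def)
    have wj: "w $ j = a + c - S a" using ha by (simp add: S_def c_def)
    have vR: "v \<in> Reg eps j"
      unfolding Reg_def using vj vk c by (auto simp: c_def[symmetric])
    have opt: "norm (w - v) < norm (w - u)" if uR: "u \<in> Reg eps j" and uv: "u \<noteq> v" for u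
    proof -
      have uk: "u $ k + c \<le> u $ j" if "k \<noteq> j" for k
        using uR that unfolding Reg_def c_def by auto
      define p where "p k = pos_part (w $ k - a)" for k
      have key: "\<And>k. k \<noteq> j \<Longrightarrow> 0 \<le> p k * (v $ k - u $ k - v $ j + u $ j)"
      proof -
        fix k assume kj: "k \<noteq> j"
        show "0 \<le> p k * (v $ k - u $ k - v $ j + u $ j)"
        proof (cases "w $ k > a")
          case True
          then have "v $ k = a" using vk[OF kj] by simp
          then have "v $ k - u $ k - v $ j + u $ j \<ge> 0" using uk[OF kj] vj by simp
          then show ?thesis by (simp add: p_def pp_nonneg)
        next
          case False
          then have "p k = 0" by (simp add: p_def pos_part_def)
          then show ?thesis by simp
        qed
      qed
      have cross: "0 \<le> (\<Sum>i\<in>UNIV. (w $ i - v $ i) * (v $ i - u $ i))"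
      proof -
        have "(\<Sum>i\<in>UNIV. (w $ i - v $ i) * (v $ i - u $ i))
            = (w $ j - v $ j) * (v $ j - u $ j) + (\<Sum>i\<in>UNIV-{j}. (w $ i - v $ i) * (v $ i - u $ i))"
          by (simp add: sum.remove[of UNIV j])
        also have "(\<Sum>i\<in>UNIV-{j}. (w $ i - v $ i) * (v $ i - u $ i))
            = (\<Sum>i\<in>UNIV-{j}. p i * (v $ i - u $ i))"
          by (rule sum.cong) (auto simp: vk p_def pos_part_def)
        also have "(w $ j - v $ j) * (v $ j - u $ j) = - (\<Sum>i\<in>UNIV-{j}. p i * (v $ j - u $ j))"
          using wj vj by (simp add: S_def p_def sum_distrib_right)
        finally have "(\<Sum>i\<in>UNIV. (w $ i - v $ i) * (v $ i - u $ i))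
            = (\<Sum>i\<in>UNIV-{j}. p i * (v $ i - u $ i - v $ j + u $ j))"
          by (simp add: sum_subtractf[symmetric] algebra_simps)
        also have "\<dots> \<ge> 0" by (rule sum_nonneg) (use key in auto)
        finally show ?thesis .
      qed
      obtain i where i: "u $ i \<noteq> v $ i" using uv by (metis vec_eq_iff)
      have sq: "0 < (\<Sum>i\<in>UNIV. (v $ i - u $ i)^2)"
      proof -
        have "0 < (v $ i - u $ i)^2" using i by simp
        also have "\<dots> \<le> (\<Sum>i\<in>UNIV. (v $ i - u $ i)^2)"
          by (rule member_le_sum) auto
        finally show ?thesis .
      qed
      have eq: "(\<Sum>i\<in>UNIV. (w $ i - u $ i)^2) = (\<Sum>i\<in>UNIV. (w $ i - v $ i)^2)
          + (\<Sum>i\<in>UNIV. (v $ i - u $ i)^2) + 2 * (\<Sum>i\<in>UNIV. (w $ i - v $ i) * (v $ i - u $ i))"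
        by (simp add: sum.distrib[symmetric] sum_distrib_left power2_eq_square algebra_simps)
      have "(w - v) \<bullet> (w - v) < (w - u) \<bullet> (w - u)"
        unfolding inner_vec_def using eq sq cross by (simp add: power2_eq_square)
      then show ?thesis by (simp add: norm_lt)
    qed
    show ?thesis using vR opt unfolding v_def c_def Let_def by blast
  qed
  show ?thesis using part1 part2 by blast
qed

end
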